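(* In the setting of the context, let $x\in(-3N,3N)$ be such that $f_N(x)\ge1$ and let $\varepsilon\in(0,1)$. Let $w\in W^{1,2}([-1,1])$ with $w(\pm1)=\pm f_N(x)$ and assume $H_x(w)\le H_x(v_N(x,\cdot))+\varepsilon$. Then there exists $C>0$ (uniform over the choice of $x$ and $\varepsilon$) such that $$\|w-v_N(x,\cdot)\|_{L^\infty([-1,1])}\le C\varepsilon^{1/2}.$$
   Context: Fix a small universal constant $\alpha\in(0,1)$ (e.g. $\alpha=1/10$). For $N>0$ define $f_N:[-3N,3N]\to\mathbb{R}$ by $f_N(x)=1-\alpha$ if $|x|\le N$, $f_N(x)=\frac{|x|(1+\alpha)}{N}-2\alpha$ if $N\le|x|\le2N$, $f_N(x)=2$ if $2N\le|x|\le3N$. For $x\in[-3N,3N]$ and $w\in W^{1,2}([-1,1])$, $H_x(w)=\int_{-1}^1(w'(y))^2dy+|\{w\ne0\}\cap[-1,1]|$, and $v_N(x,\cdot)$ is the unique minimizer of $H_x$ among $w\in W^{1,2}([-1,1])$ with $w(\pm1)=\pm f_N(x)$. *)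

theory Defs
  imports "HOL-Analysis.Analysis"
begin

definition fN :: "real \<Rightarrow> real \<Rightarrow> real \<Rightarrow> real" where
  "fN \<alpha> N x =
     (if \<bar>x\<bar> \<le> N then 1 - \<alpha>
      else if \<bar>x\<bar> \<le> 2 * N then \<bar>x\<bar> * (1 + \<alpha>) / N - 2 * \<alpha>
      else 2)"

text \<open>g is a weak derivative of w on [-1,1], with g in L^2([-1,1]);
  w is taken to be its (absolutely) continuous representative.\<close>
definition has_weak_deriv :: "(real \<Rightarrow> real) \<Rightarrow> (real \<Rightarrow> real) \<Rightarrow> bool" where
  "has_weak_deriv w g \<longleftrightarrow>
     set_integrable lborel {-1..1} g \<and>
     set_integrable lborel {-1..1} (\<lambda>t. (g t)\<^sup>2) \<and>
     (\<forall>t\<in>{-1..1}. w t = w (-1) + (LINT s:{-1..t}|lborel. g s))"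

definition W12 :: "(real \<Rightarrow> real) \<Rightarrow> bool" where
  "W12 w \<longleftrightarrow> (\<exists>g. has_weak_deriv w g)"

definition wderiv :: "(real \<Rightarrow> real) \<Rightarrow> real \<Rightarrow> real" where
  "wderiv w = (SOME g. has_weak_deriv w g)"

definition Hfun :: "(real \<Rightarrow> real) \<Rightarrow> real" where
  "Hfun w = (LINT s:{-1..1}|lborel. (wderiv w s)\<^sup>2)
            + measure lborel {y\<in>{-1..1}. w y \<noteq> 0}"

definition admissible :: "real \<Rightarrow> (real \<Rightarrow> real) \<Rightarrow> bool" where
  "admissible a w \<longleftrightarrow> W12 w \<and> w (-1) = - a \<and> w 1 = a"

definition is_minimizer :: "real \<Rightarrow> (real \<Rightarrow> real) \<Rightarrow> bool" where
  "is_minimizer a v \<longleftrightarrow> admissible a v \<and> (\<forall>w. admissible a w \<longrightarrow> Hfun v \<le> Hfun w)"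

end

theory Submission
  imports Defs
begin


lemma cs_ineq:
  fixes f :: "real \<Rightarrow> real"
  assumes f: "f integrable_on {c..d}" and f2: "(\<lambda>x. (f x)\<^sup>2) integrable_on {c..d}" and cd: "c \<le> d"
  shows "(integral {c..d} f)\<^sup>2 \<le> (d - c) * integral {c..d} (\<lambda>x. (f x)\<^sup>2)"
proof (cases "c = d")
  case True then show ?thesis by simp
next
  case False
  with cd have lt: "c < d" by simp
  define m where "m = integral {c..d} f / (d - c)"
  have i1: "(\<lambda>x. 2 * m * f x) integrable_on {c..d}" using f using integrable_cmul[OF f, of "2*m"] by simp 
  have eqf: "(\<lambda>x. (f x - m)\<^sup>2) = (\<lambda>x. ((f x)\<^sup>2 - 2 * m * f x) + m\<^sup>2)" by (auto simp: power2_diff)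
  have i2: "(\<lambda>x. (f x - m)\<^sup>2) integrable_on {c..d}"
    unfolding eqf by (intro integrable_add integrable_diff f2 i1 integrable_const_ivl)
  have "0 \<le> integral {c..d} (\<lambda>x. (f x - m)\<^sup>2)"
    by (rule integral_nonneg[OF i2]) simp
  also have "integral {c..d} (\<lambda>x. (f x - m)\<^sup>2) = integral {c..d} (\<lambda>x. (f x)\<^sup>2) - 2 * m * integral {c..d} f + m\<^sup>2 * (d - c)"
  proof -
    have id: "(\<lambda>x. (f x)\<^sup>2 - 2 * m * f x) integrable_on {c..d}" by (intro integrable_diff f2 i1)
    have "integral {c..d} (\<lambda>x. (f x - m)\<^sup>2) = integral {c..d} (\<lambda>x. ((f x)\<^sup>2 - 2 * m * f x)) + integral {c..d} (\<lambda>x. m\<^sup>2)"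
      unfolding eqf by (rule integral_add[OF id integrable_const_ivl])
    also have "integral {c..d} (\<lambda>x. ((f x)\<^sup>2 - 2 * m * f x)) = integral {c..d} (\<lambda>x. (f x)\<^sup>2) - integral {c..d} (\<lambda>x. 2 * m * f x)"
      by (rule integral_diff[OF f2 i1])
    also have "integral {c..d} (\<lambda>x. 2 * m * f x) = 2 * m * integral {c..d} f" by simp
    also have "integral {c..d} (\<lambda>x. m\<^sup>2) = m\<^sup>2 * (d - c)" using cd by simp
    finally show ?thesis .
  qed
  finally have "0 \<le> integral {c..d} (\<lambda>x. (f x)\<^sup>2) - 2 * m * integral {c..d} f + m\<^sup>2 * (d - c)" .
  then have "0 \<le> (d - c) * (integral {c..d} (\<lambda>x. (f x)\<^sup>2) - 2 * m * integral {c..d} f + m\<^sup>2 * (d - c))"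
    using lt by simp
  moreover have "(d - c) * (integral {c..d} (\<lambda>x. (f x)\<^sup>2) - 2 * m * integral {c..d} f + m\<^sup>2 * (d - c))
     = (d - c) * integral {c..d} (\<lambda>x. (f x)\<^sup>2) - (integral {c..d} f)\<^sup>2"
  proof -
    have "\<And>L I Q::real. L > 0 \<Longrightarrow> L * (Q - 2 * (I / L) * I + (I / L)\<^sup>2 * L) = L * Q - I\<^sup>2"
      by (simp add: field_simps power2_eq_square)
    then show ?thesis using lt unfolding m_def by simp
  qed
  ultimately show ?thesis by simp
qed



lemma ae_zero_of_cdf_zero:
  fixes k :: "real \<Rightarrow> real"
  assumes k: "integrable lborel k" and G: "\<And>t. integral\<^sup>L lborel (\<lambda>x. k x * indicator {..t} x) = 0"
    and k0: "integral\<^sup>L lborel k = 0"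
  shows "AE x in lborel. k x = 0"
proof -
  define P where "P = (\<lambda>x. max 0 (k x))"
  define Q where "Q = (\<lambda>x. max 0 (- k x))"
  have kPQ: "k x = P x - Q x" for x unfolding P_def Q_def by auto
  have Pi: "integrable lborel P" unfolding P_def using k by (intro integrable_max) auto
  have Qi: "integrable lborel Q" unfolding Q_def using k by (intro integrable_max) auto
  have Pm[measurable]: "P \<in> borel_measurable lborel" using Pi by auto
  have Qm[measurable]: "Q \<in> borel_measurable lborel" using Qi by auto
  have Pnn: "0 \<le> P x" "0 \<le> Q x" for x unfolding P_def Q_def by auto
  have Gt: "integral\<^sup>L lborel (\<lambda>x. k x * indicator {t<..} x) = 0" for t
  proof -
    have "integral\<^sup>L lborel (\<lambda>x. k x * indicator {t<..} x) = integral\<^sup>L lborel (\<lambda>x. k x - k x * indicator {..t} x)"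
      by (rule Bochner_Integration.integral_cong) (auto simp: indicator_def)
    also have "\<dots> = integral\<^sup>L lborel k - integral\<^sup>L lborel (\<lambda>x. k x * indicator {..t} x)"
      by (rule Bochner_Integration.integral_diff[OF k]) (rule integrable_real_mult_indicator[OF _ k]; auto)
    finally show ?thesis using G k0 by simp
  qed
  have eqm: "density lborel P = density lborel Q"
  proof (rule measure_eqI_lessThan)
    show "sets (density lborel P) = sets borel" "sets (density lborel Q) = sets borel" by auto
    fix x :: real
    have ip: "integrable lborel (\<lambda>y. P y * indicator {x<..} y)"
      by (rule integrable_real_mult_indicator) (auto intro: Pi)
    have iq: "integrable lborel (\<lambda>y. Q y * indicator {x<..} y)"
      by (rule integrable_real_mult_indicator) (auto intro: Qi)
    have eP: "emeasure (density lborel P) {x<..} = ennreal (integral\<^sup>L lborel (\<lambda>y. P y * indicator {x<..} y))"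
    proof -
      have "(\<lambda>y. ennreal (P y) * indicator {x<..} y) = (\<lambda>y. ennreal (P y * indicator {x<..} y))"
        by (auto simp: indicator_def)
      then show ?thesis
        by (subst emeasure_density) (auto intro!: nn_integral_eq_integral ip simp: Pnn)
    qed
    have eQ: "emeasure (density lborel Q) {x<..} = ennreal (integral\<^sup>L lborel (\<lambda>y. Q y * indicator {x<..} y))"
    proof -
      have "(\<lambda>y. ennreal (Q y) * indicator {x<..} y) = (\<lambda>y. ennreal (Q y * indicator {x<..} y))"
        by (auto simp: indicator_def)
      then show ?thesis
        by (subst emeasure_density) (auto intro!: nn_integral_eq_integral iq simp: Pnn)
    qed
    have "integral\<^sup>L lborel (\<lambda>y. P y * indicator {x<..} y) - integral\<^sup>L lborel (\<lambda>y. Q y * indicator {x<..} y)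
        = integral\<^sup>L lborel (\<lambda>y. k y * indicator {x<..} y)"
      by (subst Bochner_Integration.integral_diff[OF ip iq, symmetric]) (simp add: kPQ left_diff_distrib)
    then have "integral\<^sup>L lborel (\<lambda>y. P y * indicator {x<..} y) = integral\<^sup>L lborel (\<lambda>y. Q y * indicator {x<..} y)"
      using Gt by simp
    then show "emeasure (density lborel P) {x<..} = emeasure (density lborel Q) {x<..}" using eP eQ by simp
    show "emeasure (density lborel P) {x<..} < \<infinity>" using eP by simp
  qed
  have "AE x in lborel. P x = Q x"
    using sigma_finite_measure.density_unique[OF sigma_finite_lborel _ _ eqm] Pnn by auto
  then show ?thesis by eventually_elim (simp add: kPQ)
qed



lemma sq_expand:
  fixes f :: "real \<Rightarrow> real"
  assumes f: "f integrable_on {c..d}" and f2: "(\<lambda>x. (f x)\<^sup>2) integrable_on {c..d}" and cd: "c \<le> d"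
  shows "(\<lambda>x. (f x - m)\<^sup>2) integrable_on {c..d}"
    "integral {c..d} (\<lambda>x. (f x - m)\<^sup>2) = integral {c..d} (\<lambda>x. (f x)\<^sup>2) - 2 * m * integral {c..d} f + m\<^sup>2 * (d - c)"
proof -
  have i1: "(\<lambda>x. 2 * m * f x) integrable_on {c..d}" using integrable_cmul[OF f, of "2*m"] by simp
  have eqf: "(\<lambda>x. (f x - m)\<^sup>2) = (\<lambda>x. ((f x)\<^sup>2 - 2 * m * f x) + m\<^sup>2)" by (auto simp: power2_diff)
  show "(\<lambda>x. (f x - m)\<^sup>2) integrable_on {c..d}"
    unfolding eqf by (intro integrable_add integrable_diff f2 i1 integrable_const_ivl)
  have id: "(\<lambda>x. (f x)\<^sup>2 - 2 * m * f x) integrable_on {c..d}" by (intro integrable_diff f2 i1)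
  have "integral {c..d} (\<lambda>x. (f x - m)\<^sup>2) = integral {c..d} (\<lambda>x. ((f x)\<^sup>2 - 2 * m * f x)) + integral {c..d} (\<lambda>x. m\<^sup>2)"
    unfolding eqf by (rule integral_add[OF id integrable_const_ivl])
  also have "integral {c..d} (\<lambda>x. ((f x)\<^sup>2 - 2 * m * f x)) = integral {c..d} (\<lambda>x. (f x)\<^sup>2) - integral {c..d} (\<lambda>x. 2 * m * f x)"
    by (rule integral_diff[OF f2 i1])
  also have "integral {c..d} (\<lambda>x. 2 * m * f x) = 2 * m * integral {c..d} f" by simp
  also have "integral {c..d} (\<lambda>x. m\<^sup>2) = m\<^sup>2 * (d - c)" using cd by simp
  finally show "integral {c..d} (\<lambda>x. (f x - m)\<^sup>2) = integral {c..d} (\<lambda>x. (f x)\<^sup>2) - 2 * m * integral {c..d} f + m\<^sup>2 * (d - c)" .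
qed

lemma dev_bound:
  fixes f :: "real \<Rightarrow> real"
  assumes f: "f integrable_on {c..d}" and f2: "(\<lambda>x. (f x)\<^sup>2) integrable_on {c..d}"
    and le: "c \<le> c'" "c' \<le> d'" "d' \<le> d"
  shows "(integral {c'..d'} f - m * (d' - c'))\<^sup>2
     \<le> (d - c) * (integral {c..d} (\<lambda>x. (f x)\<^sup>2) - 2 * m * integral {c..d} f + m\<^sup>2 * (d - c))"
proof -
  have sub: "{c'..d'} \<subseteq> {c..d}" using le by auto
  have f': "f integrable_on {c'..d'}" by (rule integrable_on_subinterval[OF f sub])
  have f2': "(\<lambda>x. (f x)\<^sup>2) integrable_on {c'..d'}" by (rule integrable_on_subinterval[OF f2 sub])
  have fm': "(\<lambda>x. f x - m) integrable_on {c'..d'}" by (intro integrable_diff f' integrable_const_ivl)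
  have fm2': "(\<lambda>x. (f x - m)\<^sup>2) integrable_on {c'..d'}" by (rule sq_expand(1)[OF f' f2']) (use le in auto)
  have fm2: "(\<lambda>x. (f x - m)\<^sup>2) integrable_on {c..d}" by (rule sq_expand(1)[OF f f2]) (use le in auto)
  have "integral {c'..d'} (\<lambda>x. f x - m) = integral {c'..d'} f - m * (d' - c')"
    using le by (simp add: integral_diff[OF f' integrable_const_ivl])
  then have "(integral {c'..d'} f - m * (d' - c'))\<^sup>2 = (integral {c'..d'} (\<lambda>x. f x - m))\<^sup>2" by simp
  also have "\<dots> \<le> (d' - c') * integral {c'..d'} (\<lambda>x. (f x - m)\<^sup>2)"
    by (rule cs_ineq[OF fm' fm2']) (use le in auto)
  also have "\<dots> \<le> (d - c) * integral {c..d} (\<lambda>x. (f x - m)\<^sup>2)"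
  proof (rule mult_mono)
    show "integral {c'..d'} (\<lambda>x. (f x - m)\<^sup>2) \<le> integral {c..d} (\<lambda>x. (f x - m)\<^sup>2)"
      by (rule integral_subset_le[OF sub fm2' fm2]) simp
    show "0 \<le> integral {c'..d'} (\<lambda>x. (f x - m)\<^sup>2)" by (rule integral_nonneg[OF fm2']) simp
  qed (use le in auto)
  also have "integral {c..d} (\<lambda>x. (f x - m)\<^sup>2) = integral {c..d} (\<lambda>x. (f x)\<^sup>2) - 2 * m * integral {c..d} f + m\<^sup>2 * (d - c)"
    by (rule sq_expand(2)[OF f f2]) (use le in auto)
  finally show ?thesis .
qed

lemma dev_nonneg:
  fixes f :: "real \<Rightarrow> real"
  assumes f: "f integrable_on {c..d}" and f2: "(\<lambda>x. (f x)\<^sup>2) integrable_on {c..d}" and cd: "c \<le> d"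
  shows "0 \<le> integral {c..d} (\<lambda>x. (f x)\<^sup>2) - 2 * m * integral {c..d} f + m\<^sup>2 * (d - c)"
  using integral_nonneg[OF sq_expand(1)[OF f f2 cd, of m]] sq_expand(2)[OF f f2 cd, of m] by simp



lemma one_side:
  fixes a L :: real
  assumes "1 \<le> a" "0 < L" "L \<le> 2"
  shows "a\<^sup>2 / L + L - a\<^sup>2 - 1 \<ge> (1 - a\<^sup>2) * (L - 1) + (L - 1)\<^sup>2 / 2"
proof -
  have e: "a\<^sup>2 / L + L - a\<^sup>2 - 1 - (1 - a\<^sup>2) * (L - 1) = a\<^sup>2 * (L - 1)\<^sup>2 / L"
    using assms by (simp add: field_simps power2_eq_square)
  have a2: "1 \<le> a\<^sup>2" using assms by (simp add: one_le_power)
  have "(L - 1)\<^sup>2 / 2 \<le> (L - 1)\<^sup>2 / L" using assms by (intro divide_left_mono) auto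
  also have "\<dots> \<le> a\<^sup>2 * (L - 1)\<^sup>2 / L" using a2 assms
    by (intro divide_right_mono) (auto intro: mult_left_le_one_le[of "(L-1)\<^sup>2"] simp: mult_right_mono[of 1 "a\<^sup>2" "(L-1)\<^sup>2", simplified])
  finally show ?thesis using e by linarith
qed

lemma algebra_core:
  fixes a L1 L2 I1 I2 I3 \<delta> :: real
  assumes a: "1 \<le> a" "a \<le> 2" and L: "0 < L1" "0 < L2" "L1 + L2 \<le> 2"
    and J1: "0 \<le> I1 - a\<^sup>2 / L1" and J3: "0 \<le> I3 - a\<^sup>2 / L2" and I2: "0 \<le> I2"
    and H: "I1 + I2 + I3 + L1 + L2 \<le> 2 * a\<^sup>2 + 2 + \<delta>"
  shows "(L1 - 1)\<^sup>2 \<le> 2 * \<delta>" "(L2 - 1)\<^sup>2 \<le> 2 * \<delta>" "L1 * (I1 - a\<^sup>2 / L1) \<le> 2 * \<delta>"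
    "L2 * (I3 - a\<^sup>2 / L2) \<le> 2 * \<delta>" "I2 \<le> \<delta>"
proof -
  have s1: "a\<^sup>2 / L1 + L1 - a\<^sup>2 - 1 \<ge> (1 - a\<^sup>2) * (L1 - 1) + (L1 - 1)\<^sup>2 / 2" using L a by (intro one_side) auto
  have s2: "a\<^sup>2 / L2 + L2 - a\<^sup>2 - 1 \<ge> (1 - a\<^sup>2) * (L2 - 1) + (L2 - 1)\<^sup>2 / 2" using L a by (intro one_side) auto
  have a2: "1 \<le> a\<^sup>2" using a by (simp add: one_le_power)
  have "(1 - a\<^sup>2) * (L1 - 1) + (1 - a\<^sup>2) * (L2 - 1) = (a\<^sup>2 - 1) * (2 - L1 - L2)" by (simp add: algebra_simps)
  also have "\<dots> \<ge> 0" using a2 L by simp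
  finally have s3: "(1 - a\<^sup>2) * (L1 - 1) + (1 - a\<^sup>2) * (L2 - 1) \<ge> 0" .
  have main: "(I1 - a\<^sup>2 / L1) + (I3 - a\<^sup>2 / L2) + I2 + (L1 - 1)\<^sup>2 / 2 + (L2 - 1)\<^sup>2 / 2 \<le> \<delta>"
    using s1 s2 s3 H by linarith
  have q: "0 \<le> (L1 - 1)\<^sup>2" "0 \<le> (L2 - 1)\<^sup>2" by auto
  show "(L1 - 1)\<^sup>2 \<le> 2 * \<delta>" "(L2 - 1)\<^sup>2 \<le> 2 * \<delta>" "I2 \<le> \<delta>" using main J1 J3 I2 q by linarith+
  have d1: "I1 - a\<^sup>2 / L1 \<le> \<delta>" "I3 - a\<^sup>2 / L2 \<le> \<delta>" using main J1 J3 I2 q by linarith+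
  have "L1 * (I1 - a\<^sup>2 / L1) \<le> 2 * (I1 - a\<^sup>2 / L1)" using L J1 by (intro mult_right_mono) auto
  moreover have "2 * (I1 - a\<^sup>2 / L1) \<le> 2 * \<delta>" using d1 by simp
  ultimately show "L1 * (I1 - a\<^sup>2 / L1) \<le> 2 * \<delta>" by (rule order_trans)
  have "L2 * (I3 - a\<^sup>2 / L2) \<le> 2 * (I3 - a\<^sup>2 / L2)" using L J3 by (intro mult_right_mono) auto
  moreover have "2 * (I3 - a\<^sup>2 / L2) \<le> 2 * \<delta>" using d1 by simp
  ultimately show "L2 * (I3 - a\<^sup>2 / L2) \<le> 2 * \<delta>" by (rule order_trans)
qed


lemma linear_H:
  assumes hw: "has_weak_deriv (\<lambda>y. a * y) g"
  shows "(LINT s:{-1..1}|lborel. (g s)\<^sup>2) = 2 * a\<^sup>2"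
proof -
  have gi: "set_integrable lborel {-1..1} g" and g2i: "set_integrable lborel {-1..1} (\<lambda>t. (g t)\<^sup>2)"
    and rep: "\<And>t. t \<in> {-1..1} \<Longrightarrow> a * t = - a + (LINT s:{-1..t}|lborel. g s)"
    using hw unfolding has_weak_deriv_def by auto
  define k where "k = (\<lambda>x. indicator {-1..1} x * (g x - a))"
  have gi': "integrable lborel (\<lambda>x. indicator {-1..1} x * g x)" using gi unfolding set_integrable_def by simp
  have ci: "integrable lborel (\<lambda>x. indicator {-1..1::real} x * a)"
    using integrable_real_mult_indicator[of "{-1..1::real}" lborel "\<lambda>_. a"] by (simp add: mult.commute)
  have ki: "integrable lborel k"
  proof -
    have "k = (\<lambda>x. indicator {-1..1} x * g x - indicator {-1..1} x * a)" unfolding k_def by (auto simp: algebra_simps)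
    then show ?thesis using gi' ci by simp
  qed
  have Gm: "integral\<^sup>L lborel (\<lambda>x. k x * indicator {..t} x) = 0" if t: "t \<in> {-1..1}" for t
  proof -
    have git: "set_integrable lborel {-1..t} g" by (rule set_integrable_subset[OF gi]) (use t in auto)
    then have git': "integrable lborel (\<lambda>x. indicator {-1..t} x * g x)" unfolding set_integrable_def by simp
    have cit: "integrable lborel (\<lambda>x. indicator {-1..t::real} x * a)"
    proof -
      have "integrable lborel (indicat_real {-1..t})" by (rule integrable_real_indicator) (use t in auto)
      then show ?thesis by (simp add: mult.commute)
    qed
    have "integral\<^sup>L lborel (\<lambda>x. k x * indicator {..t} x) = integral\<^sup>L lborel (\<lambda>x. indicator {-1..t} x * g x - indicator {-1..t} x * a)"
      using t by (intro Bochner_Integration.integral_cong) (auto simp: k_def indicator_def)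
    also have "\<dots> = integral\<^sup>L lborel (\<lambda>x. indicator {-1..t} x * g x) - integral\<^sup>L lborel (\<lambda>x. indicator {-1..t::real} x * a)"
      by (rule Bochner_Integration.integral_diff[OF git' cit])
    also have "integral\<^sup>L lborel (\<lambda>x. indicator {-1..t} x * g x) = (LINT s:{-1..t}|lborel. g s)"
      by (simp add: set_lebesgue_integral_def)
    also have "integral\<^sup>L lborel (\<lambda>x. indicator {-1..t::real} x * a) = (t + 1) * a"
      using t by simp
    finally show ?thesis using rep[OF t] by (simp add: algebra_simps)
  qed
  have G: "integral\<^sup>L lborel (\<lambda>x. k x * indicator {..t} x) = 0" for t
  proof (cases "t < -1")
    case True
    then have "(\<lambda>x. k x * indicator {..t} x) = (\<lambda>x. 0)" by (auto simp: k_def indicator_def fun_eq_iff)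
    then show ?thesis by simp
  next
    case False
    show ?thesis
    proof (cases "t \<le> 1")
      case True with False show ?thesis by (intro Gm) auto
    next
      case False
      then have "(\<lambda>x. k x * indicator {..t} x) = (\<lambda>x. k x * indicator {..1} x)" by (auto simp: k_def indicator_def fun_eq_iff)
      then show ?thesis using Gm[of 1] by simp
    qed
  qed
  have k0: "integral\<^sup>L lborel k = 0"
  proof -
    have "k = (\<lambda>x. k x * indicator {..1} x)" by (auto simp: k_def indicator_def fun_eq_iff)
    then show ?thesis using G[of 1] by metis
  qed
  have ae: "AE x in lborel. k x = 0" by (rule ae_zero_of_cdf_zero[OF ki G k0])
  have "(LINT s:{-1..1}|lborel. (g s)\<^sup>2) = integral\<^sup>L lborel (\<lambda>x. indicator {-1..1::real} x * a\<^sup>2)"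
    unfolding set_lebesgue_integral_def
  proof (rule integral_cong_AE)
    show "(\<lambda>x. indicator {-1..1} x *\<^sub>R (g x)\<^sup>2) \<in> borel_measurable lborel"
      using g2i unfolding set_integrable_def by (rule borel_measurable_integrable)
    show "(\<lambda>x. indicator {-1..1::real} x * a\<^sup>2) \<in> borel_measurable lborel" by simp
    show "AE x in lborel. indicator {-1..1} x *\<^sub>R (g x)\<^sup>2 = indicator {-1..1::real} x * a\<^sup>2"
      using ae by eventually_elim (auto simp: k_def indicator_def)
  qed
  also have "\<dots> = 2 * a\<^sup>2" by simp
  finally show ?thesis .
qed



lemma sq_le_abs:
  fixes x \<delta> :: real
  assumes "x\<^sup>2 \<le> 2 * \<delta>"
  shows "\<bar>x\<bar> \<le> sqrt 2 * sqrt \<delta>"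
proof -
  have "\<bar>x\<bar> = sqrt (x\<^sup>2)" by simp
  also have "\<dots> \<le> sqrt (2 * \<delta>)" using assms by (rule real_sqrt_le_mono)
  also have "\<dots> = sqrt 2 * sqrt \<delta>" by (simp add: real_sqrt_mult)
  finally show ?thesis .
qed

lemma coef_bound:
  fixes a t e :: real
  assumes "0 \<le> a" "a \<le> 2" "0 \<le> t" "t \<le> 1"
  shows "\<bar>a * t * e\<bar> \<le> 2 * \<bar>e\<bar>"
proof -
  have "a * t \<le> 2 * 1" using assms by (intro mult_mono) auto
  then have "\<bar>a * t\<bar> \<le> 2" using assms by simp
  then have le: "\<bar>a * t\<bar> * \<bar>e\<bar> \<le> 2 * \<bar>e\<bar>" by (rule mult_right_mono) simp
  have eq: "\<bar>a * t * e\<bar> = \<bar>a * t\<bar> * \<bar>e\<bar>" by (rule abs_mult)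
  show ?thesis by (rule ord_eq_le_trans[OF eq le])
qed

lemma comb3:
  fixes x z e u S :: real
  assumes "\<bar>x\<bar> \<le> S" "u = x + z" "\<bar>z\<bar> \<le> 2 * \<bar>e\<bar>" "\<bar>e\<bar> \<le> S"
  shows "\<bar>u\<bar> \<le> 3 * S"
  using assms abs_triangle_ineq[of x z] by linarith

lemma stab:
  assumes hw: "has_weak_deriv w g" and wm: "w (-1) = -a" and wp: "w 1 = a" and a: "1 \<le> a" "a \<le> 2"
    and H: "(LINT s:{-1..1}|lborel. (g s)\<^sup>2) + measure lborel {y\<in>{-1..1}. w y \<noteq> 0} \<le> 2 * a\<^sup>2 + 2 + \<delta>"
    and y: "y \<in> {-1..1}"
  shows "\<bar>w y - a * y\<bar> \<le> 5 * sqrt \<delta>"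
proof -
  have gi: "set_integrable lborel {-1..1} g" and g2i: "set_integrable lborel {-1..1} (\<lambda>t. (g t)\<^sup>2)"
    and rep: "\<And>t. t \<in> {-1..1} \<Longrightarrow> w t = w (-1) + (LINT s:{-1..t}|lborel. g s)"
    using hw unfolding has_weak_deriv_def by blast+
  have gI: "g integrable_on {-1..1}" by (rule set_borel_integral_eq_integral(1)[OF gi])
  have g2I: "(\<lambda>t. (g t)\<^sup>2) integrable_on {-1..1}" by (rule set_borel_integral_eq_integral(1)[OF g2i])
  have Hint: "(LINT s:{-1..1}|lborel. (g s)\<^sup>2) = integral {-1..1} (\<lambda>t. (g t)\<^sup>2)"
    by (rule set_borel_integral_eq_integral(2)[OF g2i])
  have repI: "w t = -a + integral {-1..t} g" if t: "t \<in> {-1..1}" for t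
  proof -
    have "set_integrable lborel {-1..t} g" by (rule set_integrable_subset[OF gi]) (use t in auto)
    then have "(LINT s:{-1..t}|lborel. g s) = integral {-1..t} g" by (rule set_borel_integral_eq_integral(2))
    then show ?thesis using rep[OF t] wm by simp
  qed
  have cont: "continuous_on {-1..1} w"
  proof (rule continuous_on_eq)
    show "continuous_on {-1..1} (\<lambda>t. -a + integral {-1..t} g)"
      by (intro continuous_on_add continuous_on_const indefinite_integral_continuous_1[OF gI])
  qed (use repI in auto)
  define Z where "Z = {t \<in> {-1..1}. w t = 0}"
  have Zc: "closed Z" unfolding Z_def by (rule continuous_closed_preimage_constant[OF cont]) auto
  have Zsub: "Z \<subseteq> {-1..1}" unfolding Z_def by auto
  have Zne: "Z \<noteq> {}"
  proof -
    obtain t where "-1 \<le> t" "t \<le> 1" "w t = 0" using IVT'[of w "-1" 0 1] cont wm wp a by auto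
    then show ?thesis unfolding Z_def by auto
  qed
  have bb: "bdd_below Z" "bdd_above Z" using Zsub bdd_below_mono[of "{-1..1::real}" Z] bdd_above_mono[of "{-1..1::real}" Z] by auto
  define p where "p = Inf Z"
  define q where "q = Sup Z"
  have pZ: "p \<in> Z" unfolding p_def by (rule closed_contains_Inf[OF Zne bb(1) Zc])
  have qZ: "q \<in> Z" unfolding q_def by (rule closed_contains_Sup[OF Zne bb(2) Zc])
  have pl: "z \<in> Z \<Longrightarrow> p \<le> z" and qu: "z \<in> Z \<Longrightarrow> z \<le> q" for z
    unfolding p_def q_def using bb by (auto intro: cInf_lower cSup_upper)
  have pq: "p \<le> q" using pl[OF qZ] .
  have wp0: "w p = 0" and wq0: "w q = 0" using pZ qZ unfolding Z_def by auto
  have p1: "-1 < p"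
  proof -
    have "p \<noteq> -1" using wp0 wm a by auto
    then show ?thesis using pZ Zsub by force
  qed
  have q1: "q < 1"
  proof -
    have "q \<noteq> 1" using wq0 wp a by auto
    then show ?thesis using qZ Zsub by force
  qed
  have meas: "2 - (q - p) \<le> measure lborel {y\<in>{-1..1}. w y \<noteq> 0}"
  proof -
    have Zs: "Z \<in> sets lborel" using Zc by (simp add: borel_closed)
    have Seq: "{y\<in>{-1..1}. w y \<noteq> 0} = {-1..1} - Z" unfolding Z_def by auto
    have Sf: "{-1..1} - Z \<in> fmeasurable lborel" by (intro fmeasurable_Diff Zs) (auto intro!: fmeasurableI)
    have Tsub: "{-1..1} - {p..q} \<subseteq> {-1..1} - Z" using pl qu by force
    have "measure lborel ({-1..1} - {p..q}) = measure lborel {-1..1::real} - measure lborel {p..q}"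
      by (rule measure_Diff) (use p1 q1 in auto)
    also have "\<dots> = 2 - (q - p)" using pq by simp
    finally have "measure lborel ({-1..1} - {p..q}) = 2 - (q - p)" .
    moreover have "measure lborel ({-1..1} - {p..q}) \<le> measure lborel ({-1..1} - Z)"
      by (rule measure_mono_fmeasurable[OF Tsub _ Sf]) auto
    ultimately show ?thesis using Seq by simp
  qed
  define L1 where "L1 = p + 1"
  define L2 where "L2 = 1 - q"
  have L1p: "0 < L1" and L2p: "0 < L2" and Ls: "L1 + L2 \<le> 2" using p1 q1 pq unfolding L1_def L2_def by auto
  have sub1: "{-1..p} \<subseteq> {-1..1}" "{p..q} \<subseteq> {-1..1}" "{q..1} \<subseteq> {-1..1}" "{p..1} \<subseteq> {-1..1}"
    using p1 q1 pq by auto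
  have gI1: "g integrable_on {-1..p}" and gI2: "g integrable_on {p..q}" and gI3: "g integrable_on {q..1}"
    and gIp1: "g integrable_on {p..1}"
    using sub1 by (auto intro: integrable_on_subinterval[OF gI])
  have g2I1: "(\<lambda>t. (g t)\<^sup>2) integrable_on {-1..p}" and g2I2: "(\<lambda>t. (g t)\<^sup>2) integrable_on {p..q}"
    and g2I3: "(\<lambda>t. (g t)\<^sup>2) integrable_on {q..1}" and g2Ip1: "(\<lambda>t. (g t)\<^sup>2) integrable_on {p..1}"
    using sub1 by (auto intro: integrable_on_subinterval[OF g2I])
  define I1 where "I1 = integral {-1..p} (\<lambda>t. (g t)\<^sup>2)"
  define I2 where "I2 = integral {p..q} (\<lambda>t. (g t)\<^sup>2)"
  define I3 where "I3 = integral {q..1} (\<lambda>t. (g t)\<^sup>2)"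
  have Isum: "integral {-1..1} (\<lambda>t. (g t)\<^sup>2) = I1 + I2 + I3"
  proof -
    have "integral {-1..p} (\<lambda>t. (g t)\<^sup>2) + integral {p..1} (\<lambda>t. (g t)\<^sup>2) = integral {-1..1} (\<lambda>t. (g t)\<^sup>2)"
      by (rule Henstock_Kurzweil_Integration.integral_combine[OF _ _ g2I]) (use p1 q1 pq in auto)
    moreover have "integral {p..q} (\<lambda>t. (g t)\<^sup>2) + integral {q..1} (\<lambda>t. (g t)\<^sup>2) = integral {p..1} (\<lambda>t. (g t)\<^sup>2)"
      by (rule Henstock_Kurzweil_Integration.integral_combine[OF _ _ g2Ip1]) (use p1 q1 pq in auto)
    ultimately show ?thesis unfolding I1_def I2_def I3_def by linarith
  qed
  have int1: "integral {-1..p} g = a" using repI[of p] wp0 p1 q1 pq by auto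
  have int3: "integral {q..1} g = a"
  proof -
    have "integral {-1..q} g + integral {q..1} g = integral {-1..1} g"
      by (rule Henstock_Kurzweil_Integration.integral_combine[OF _ _ gI]) (use p1 q1 pq in auto)
    moreover have "integral {-1..q} g = a" using repI[of q] wq0 p1 q1 pq by auto
    moreover have "integral {-1..1} g = 2 * a" using repI[of 1] wp by auto
    ultimately show ?thesis by linarith
  qed
  have I2nn: "0 \<le> I2" unfolding I2_def by (rule integral_nonneg[OF g2I2]) simp
  have gen: "\<And>L I. L > 0 \<Longrightarrow> I - 2 * (a / L) * a + (a / L)\<^sup>2 * L = I - a\<^sup>2 / L"
    by (simp add: field_simps power2_eq_square)
  have J1e: "I1 - 2 * (a / L1) * integral {-1..p} g + (a / L1)\<^sup>2 * (p - -1) = I1 - a\<^sup>2 / L1"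
    using gen[OF L1p, of I1] unfolding int1 by (simp add: L1_def)
  have J3e: "I3 - 2 * (a / L2) * integral {q..1} g + (a / L2)\<^sup>2 * (1 - q) = I3 - a\<^sup>2 / L2"
    using gen[OF L2p, of I3] unfolding int3 by (simp add: L2_def)
  have J1: "0 \<le> I1 - a\<^sup>2 / L1"
    using dev_nonneg[OF gI1 g2I1, of "a / L1"] p1 J1e unfolding I1_def by simp
  have J3: "0 \<le> I3 - a\<^sup>2 / L2"
    using dev_nonneg[OF gI3 g2I3, of "a / L2"] q1 J3e unfolding I3_def by simp
  have Htot: "I1 + I2 + I3 + L1 + L2 \<le> 2 * a\<^sup>2 + 2 + \<delta>"
    using H meas Isum Hint unfolding L1_def L2_def by linarith
  note alg = algebra_core[OF a L1p L2p Ls J1 J3 I2nn Htot]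
  have dpos: "0 \<le> \<delta>" using alg(1) by (smt (verit) zero_le_power2)
  have s2: "sqrt 2 \<le> 5 / 3"
    by (rule real_le_lsqrt) (auto simp: power2_eq_square)
  define S where "S = sqrt 2 * sqrt \<delta>"
  have S0: "0 \<le> S" unfolding S_def using dpos by simp
  have "3 * sqrt 2 \<le> 5" using s2 by simp
  then have "(3 * sqrt 2) * sqrt \<delta> \<le> 5 * sqrt \<delta>" by (rule mult_right_mono) (simp add: dpos)
  then have S5: "3 * S \<le> 5 * sqrt \<delta>" unfolding S_def by (simp add: mult.assoc)
  have Lb1: "\<bar>L1 - 1\<bar> \<le> S" unfolding S_def by (rule sq_le_abs[OF alg(1)])
  have Lb2: "\<bar>L2 - 1\<bar> \<le> S" unfolding S_def by (rule sq_le_abs[OF alg(2)])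
  have yI: "y \<in> {-1..1}" by (rule y)
  consider (A) "y \<le> p" | (B) "p \<le> y" "y \<le> q" | (C) "q \<le> y" by linarith
  then have "\<bar>w y - a * y\<bar> \<le> 3 * S"
  proof cases
    case A
    define E where "E = integral {-1..y} g - (a / L1) * (y - -1)"
    have "E\<^sup>2 \<le> (p - -1) * (integral {-1..p} (\<lambda>t. (g t)\<^sup>2) - 2 * (a / L1) * integral {-1..p} g + (a / L1)\<^sup>2 * (p - -1))"
      unfolding E_def by (rule dev_bound[OF gI1 g2I1]) (use A y in auto)
    also have "\<dots> = L1 * (I1 - a\<^sup>2 / L1)" using J1e unfolding I1_def L1_def by simp
    also have "\<dots> \<le> 2 * \<delta>" by (rule alg(3))
    finally have "\<bar>E\<bar> \<le> S" unfolding S_def by (rule sq_le_abs)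
    moreover have "w y - a * y = E + a * ((y + 1) / L1) * (1 - L1)"
    proof -
      have ii: "integral {-1..y} g = w y + a" using repI[OF yI] by simp
      show ?thesis unfolding E_def ii using L1p by (simp add: field_simps)
    qed
    moreover have "\<bar>a * ((y + 1) / L1) * (1 - L1)\<bar> \<le> 2 * \<bar>1 - L1\<bar>"
      by (rule coef_bound) (use a A y L1p in \<open>auto simp: L1_def\<close>)
    moreover have "\<bar>1 - L1\<bar> \<le> S" using Lb1 by simp
    ultimately show ?thesis by (rule comb3)
  next
    case B
    have "integral {-1..p} g + integral {p..y} g = integral {-1..y} g"
      by (rule Henstock_Kurzweil_Integration.integral_combine) (use B p1 y in \<open>auto intro: integrable_on_subinterval[OF gI]\<close>)
    then have wy: "w y = integral {p..y} g" using repI[OF yI] int1 by simp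
    have "(integral {p..y} g - 0 * (y - p))\<^sup>2 \<le> (q - p) * (integral {p..q} (\<lambda>t. (g t)\<^sup>2) - 2 * 0 * integral {p..q} g + 0\<^sup>2 * (q - p))"
      by (rule dev_bound[OF gI2 g2I2]) (use B in auto)
    then have "(w y)\<^sup>2 \<le> (q - p) * I2" unfolding wy I2_def by simp
    also have "\<dots> \<le> 2 * I2" using I2nn p1 q1 by (intro mult_right_mono) auto
    also have "\<dots> \<le> 2 * \<delta>" using alg(5) by simp
    finally have wb: "\<bar>w y\<bar> \<le> S" unfolding S_def by (rule sq_le_abs)
    have "\<bar>y\<bar> \<le> S" using B Lb1 Lb2 unfolding L1_def L2_def by linarith
    then have "a * \<bar>y\<bar> \<le> 2 * S" using a S0 by (intro mult_mono) auto
    moreover have "\<bar>a * y\<bar> = a * \<bar>y\<bar>" using a by (simp add: abs_mult)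
    ultimately have ay: "\<bar>a * y\<bar> \<le> 2 * S" by simp
    have "\<bar>w y - a * y\<bar> \<le> \<bar>w y\<bar> + \<bar>a * y\<bar>" by (rule abs_triangle_ineq4)
    with wb ay show ?thesis by linarith
  next
    case C
    have "integral {-1..y} g + integral {y..1} g = integral {-1..1} g"
      by (rule Henstock_Kurzweil_Integration.integral_combine[OF _ _ gI]) (use C q1 y in auto)
    moreover have "integral {-1..1} g = 2 * a" using repI[of 1] wp by auto
    ultimately have wy: "w y = a - integral {y..1} g" using repI[OF yI] by simp
    define E where "E = integral {y..1} g - (a / L2) * (1 - y)"
    have "E\<^sup>2 \<le> (1 - q) * (integral {q..1} (\<lambda>t. (g t)\<^sup>2) - 2 * (a / L2) * integral {q..1} g + (a / L2)\<^sup>2 * (1 - q))"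
      unfolding E_def by (rule dev_bound[OF gI3 g2I3]) (use C y in auto)
    also have "\<dots> = L2 * (I3 - a\<^sup>2 / L2)" using J3e unfolding I3_def L2_def by simp
    also have "\<dots> \<le> 2 * \<delta>" by (rule alg(4))
    finally have "\<bar>E\<bar> \<le> S" unfolding S_def by (rule sq_le_abs)
    moreover have "w y - a * y = - E + a * ((1 - y) / L2) * (L2 - 1)"
    proof -
      have ii: "integral {y..1} g = a - w y" using wy by simp
      show ?thesis unfolding E_def ii using L2p by (simp add: field_simps)
    qed
    moreover have "\<bar>a * ((1 - y) / L2) * (L2 - 1)\<bar> \<le> 2 * \<bar>L2 - 1\<bar>"
      by (rule coef_bound) (use a C y L2p in \<open>auto simp: L2_def\<close>)
    moreover have "\<bar>L2 - 1\<bar> \<le> S" using Lb2 by simp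
    moreover have "\<bar>- E\<bar> \<le> S" using calculation(1) by simp
    ultimately show ?thesis by (intro comb3[of "- E" S _ "a * ((1 - y) / L2) * (L2 - 1)" "L2 - 1"]) auto
  qed
  then show ?thesis using S5 by linarith
qed


lemma fN_le2:
  assumes "0 < \<alpha>" "\<alpha> < 1" "0 < N" "\<bar>x\<bar> < 3 * N"
  shows "fN \<alpha> N x \<le> 2"
proof -
  have "\<bar>x\<bar> * (1 + \<alpha>) / N - 2 * \<alpha> \<le> 2" if "\<bar>x\<bar> \<le> 2 * N"
  proof -
    have "\<bar>x\<bar> * (1 + \<alpha>) \<le> (2 * N) * (1 + \<alpha>)" using that assms by (intro mult_right_mono) auto
    then have "\<bar>x\<bar> * (1 + \<alpha>) / N \<le> (2 * N) * (1 + \<alpha>) / N" using assms by (intro divide_right_mono) auto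
    also have "\<dots> = 2 * (1 + \<alpha>)" using assms by simp
    finally show ?thesis by simp
  qed
  then show ?thesis using assms unfolding fN_def by auto
qed

lemma lin_admissible:
  fixes a :: real
  shows "has_weak_deriv (\<lambda>y. a * y) (\<lambda>_. a)"
proof -
  have c1: "set_integrable lborel {-1..1::real} (\<lambda>_. a)"
    unfolding set_integrable_def using integrable_real_indicator[of "{-1..1::real}" lborel]
    by (simp add: mult.commute)
  have c2: "set_integrable lborel {-1..1::real} (\<lambda>_. (a)\<^sup>2)"
    unfolding set_integrable_def using integrable_real_indicator[of "{-1..1::real}" lborel]
    by (simp add: mult.commute)
  have c3: "a * t = a * (-1) + (LINT s:{-1..t}|lborel. a)" if t: "t \<in> {-1..1}" for t
  proof -
    have "(LINT s:{-1..t}|lborel. a) = (t + 1) * a"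
      using t unfolding set_lebesgue_integral_def by simp
    then show ?thesis by (simp add: algebra_simps)
  qed
  show ?thesis unfolding has_weak_deriv_def using c1 c2 c3 by auto
qed

lemma H_lin:
  fixes a :: real
  assumes "a \<noteq> 0"
  shows "Hfun (\<lambda>y. a * y) = 2 * a\<^sup>2 + 2"
proof -
  have "W12 (\<lambda>y. a * y)" unfolding W12_def using lin_admissible by blast
  then have hw: "has_weak_deriv (\<lambda>y. a * y) (wderiv (\<lambda>y. a * y))"
    unfolding W12_def wderiv_def by (rule someI_ex)
  have e1: "(LINT s:{-1..1}|lborel. (wderiv (\<lambda>y. a * y) s)\<^sup>2) = 2 * a\<^sup>2" by (rule linear_H[OF hw])
  have "{y \<in> {-1..1}. a * y \<noteq> 0} = {-1..1::real} - {0}" using assms by auto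
  then have "measure lborel {y \<in> {-1..1}. a * y \<noteq> 0} = measure lborel {-1..1::real} - measure lborel {0::real}"
    by (simp only:) (rule measure_Diff, auto)
  then have e2: "measure lborel {y \<in> {-1..1}. a * y \<noteq> 0} = 2" by simp
  show ?thesis unfolding Hfun_def e1 e2 ..
qed

theorem lemma3p6:
  fixes \<alpha> N :: real
  assumes "0 < \<alpha>" "\<alpha> < 1" "0 < N"
  shows "\<exists>C>0. \<forall>x \<epsilon> w v.
           x \<in> {-3*N<..<3*N} \<and> fN \<alpha> N x \<ge> 1 \<and> 0 < \<epsilon> \<and> \<epsilon> < 1 \<and>
           admissible (fN \<alpha> N x) w \<and> is_minimizer (fN \<alpha> N x) v \<and>
           Hfun w \<le> Hfun v + \<epsilon>
           \<longrightarrow> (\<forall>y\<in>{-1..1}. \<bar>w y - v y\<bar> \<le> C * sqrt \<epsilon>)"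
proof (intro exI[of _ 10] conjI allI impI ballI)
  fix x \<epsilon> w v y
  assume h: "x \<in> {-3*N<..<3*N} \<and> fN \<alpha> N x \<ge> 1 \<and> 0 < \<epsilon> \<and> \<epsilon> < 1 \<and>
           admissible (fN \<alpha> N x) w \<and> is_minimizer (fN \<alpha> N x) v \<and>
           Hfun w \<le> Hfun v + \<epsilon>" and y: "y \<in> {-1..1::real}"
  define a where "a = fN \<alpha> N x"
  have a1: "1 \<le> a" using h unfolding a_def by simp
  have a2: "a \<le> 2" unfolding a_def using h assms by (intro fN_le2) auto
  have adw: "admissible a w" and minv: "is_minimizer a v" and Hw: "Hfun w \<le> Hfun v + \<epsilon>"
    and e0: "0 < \<epsilon>" using h unfolding a_def by auto
  have adl: "admissible a (\<lambda>y. a * y)" unfolding admissible_def W12_def using lin_admissible by auto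
  have Hv: "Hfun v \<le> 2 * a\<^sup>2 + 2" using minv adl H_lin[of a] a1 unfolding is_minimizer_def by auto
  have adv: "admissible a v" using minv unfolding is_minimizer_def by auto
  have exv: "\<exists>g. has_weak_deriv v g" using adv unfolding admissible_def W12_def by blast
  have hwv: "has_weak_deriv v (wderiv v)" using exv unfolding wderiv_def by (rule someI_ex)
  have exw: "\<exists>g. has_weak_deriv w g" using adw unfolding admissible_def W12_def by blast
  have hww: "has_weak_deriv w (wderiv w)" using exw unfolding wderiv_def by (rule someI_ex)
  have bv: "\<bar>v y - a * y\<bar> \<le> 5 * sqrt 0"
    by (rule stab[OF hwv _ _ a1 a2 _ y]) (use adv Hv in \<open>auto simp: admissible_def Hfun_def\<close>)
  have bw: "\<bar>w y - a * y\<bar> \<le> 5 * sqrt \<epsilon>"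
    by (rule stab[OF hww _ _ a1 a2 _ y]) (use adw Hv Hw in \<open>auto simp: admissible_def Hfun_def\<close>)
  have "\<bar>w y - v y\<bar> \<le> \<bar>w y - a * y\<bar> + \<bar>v y - a * y\<bar>" by linarith
  also have "\<dots> \<le> 5 * sqrt \<epsilon>" using bv bw by simp
  also have "\<dots> \<le> 10 * sqrt \<epsilon>" using e0 by simp
  finally show "\<bar>w y - v y\<bar> \<le> 10 * sqrt \<epsilon>" .
qed simp

end
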